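(* Let $G=(V,E)$ be a social network with seller $s$ and buyers $N$, and let the fair diffusion mechanism (FDM) be as defined in the context. Then FDM is individually rational: for every buyer $i\in N$, every true type profile $\theta$, and every feasible action profile $a\in\mathcal{F}(\theta)$ in which $i$ participates with $a_i=(v_i,r_i')$ (i.e. $i$ reports her true valuation $v_i$ and an arbitrary set $r_i'\subseteq r_i$ of invited neighbours), we have $u_i(\theta_i,a)=\pi_i(a)v_i-p_i(a)\ge 0$.
   Context: Model. A seller $s$ sells one item on an undirected graph $G=(V,E)$ with $V=N\cup\{s\}$, $N=\{1,\dots,n\}$ the buyers. Each buyer $i$ has neighbour set $r_i\subseteq V$ and private valuation $v_i\ge 0$; her type is $\theta_i=(v_i,r_i)$; the seller's valuation is $0$ and $r_s$ denotes the seller's neighbours. Each buyer reports an action $a_i=(v_i',r_i')$ with $v_i'\ge0$ the reported valuation and $r_i'\subseteq r_i$ the neighbours she invites, or $a_i=nil$ if she does not participate. A profile $a$ is feasible ($a\in\mathcal{F}(\theta)$) if every $i$ with $a_i\neq nil$ is reachable by a path $s,k_1,\dots,k_m,i$ with $k_1\in r_s$, $k_{t+1}\in r'_{k_t}$ and $i\in r'_{k_m}$. All graph notions below refer to this reported network (participating buyers, with $j$ reachable from $i$ when $j\in r_i'$, and from $s$ when $j\in r_s$); $d_i$ is the length of the shortest such path from $s$ to $i$. A mechanism gives an allocation $\pi_i(a)\in\{0,1\}$ (at most one winner) and payments $p_i(a)\in\mathbb{R}$ (negative means $i$ receives money); buyer utility is $u_i(\theta_i,a)=\pi_i(a)v_i-p_i(a)$,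 and the seller's revenue is $\sum_{i\in N}p_i(a)$. Definitions. A set $D\subseteq N$ is a cut set of buyer $i$ if no path from $s$ to $i$ exists without $D$; it is a minimal cut set if no proper subset is a cut set. $j$ is a critical ancestor of $i$ if $j$ belongs to a minimal cut set of $i$; a strong critical ancestor if $\{j\}$ is a minimal cut set of $i$; a weak critical ancestor if critical but not strong. $V_i=\{j\in N: i$ is a strong critical ancestor of $j\}$ (so $i\in V_i$); for $K\subseteq N$, $N_{-K}=N\setminus\bigcup_{i\in K}V_i$, and $N_{-i}=N_{-\{i\}}$. For $D\subseteq N$, $v_D^{1^{st}}=\max_{i\in D}v_i'$, and $g_D^{1^{st}}\in\arg\max_{i\in D}v^{1^{st}}_{V_i}$ (random tie-breaking). The strong critical ancestor sequence of $i$ is $C_i=(c_1^i,\dots,c_k^i)$, the strong critical ancestors of $i$ ordered by strictly increasing depth, with $c_k^i=i$. FDM. Let $h\in\arg\max_{i\in N}v_i'$ (random tie-breaking) and $C=(c_1,\dots,c_h)$ its strong critical ancestor sequence. For consecutive $c_j,c_{j+1}$, let $M_{c_jc_{j+1}}$ be the set of weak critical ancestors of $h$ lying on some simple path from $c_j$ to $c_{j+1}$ (for the last element the corresponding set $\{c_{j+1}\}\cup M_{c_jc_{j+1}}$ is empty). Allocation: the item goes to the first $c_j\in C$ (smallest $j$) with $v'_{c_j}=v^{1^{st}}_{N_{-(\{c_{j+1}\}\cup M_{c_jc_{j+1}})}}$; call it $c_w$, and let $\hat C=(c_1,\dots,c_w)$. Rewards: for $c_j\in\hat C$ (with $j\ge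 2$), $R_{c_j}=\big(v^{1^{st}}_{N_{-(\{c_j\}\cup \{g^{1^{st}}_{M_{c_{j-1}c_j}}\})}}-v^{1^{st}}_{N_{-(\{c_j\}\cup M_{c_{j-1}c_j})}}\big)/(|M_{c_{j-1}c_j}|+1)$; for $i\in M_{c_{j-1}c_j}$, $R_i=\big(v^{1^{st}}_{N_{-(\{i\}\cup\{c_j\})}}-v^{1^{st}}_{N_{-(\{c_j\}\cup M_{c_{j-1}c_j})}}\big)/(|M_{c_{j-1}c_j}|+1)$; otherwise $R_i=0$. Payments: $p_{c_j}=v^{1^{st}}_{N_{-c_j}}-v^{1^{st}}_{N_{-(\{c_{j+1}\}\cup M_{c_jc_{j+1}})}}-R_{c_j}$ for $c_j\in\hat C$, $j<w$; $p_{c_w}=v^{1^{st}}_{N_{-c_w}}-R_{c_w}$; $p_i=-R_i$ for $i\in M_{c_{j-1}c_j}$, $2\le j\le w$; $p_i=0$ otherwise. *)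

theory Defs
  imports Complex_Main
begin

text \<open>An action profile assigns to each buyer either None (nil, not participating) or
Some (v', r'): reported valuation v' and invited neighbour set r'.\<close>

type_synonym 'a profile = "'a \<Rightarrow> (real \<times> 'a set) option"

definition part :: "'a profile \<Rightarrow> 'a set" where
  "part a = {i. a i \<noteq> None}"

definition bid :: "'a profile \<Rightarrow> 'a \<Rightarrow> real" where
  "bid a i = (case a i of Some (v, _) \<Rightarrow> v | None \<Rightarrow> 0)"

definition invs :: "'a profile \<Rightarrow> 'a \<Rightarrow> 'a set" where
  "invs a i = (case a i of Some (_, r) \<Rightarrow> r | None \<Rightarrow> {})"

definition redge :: "'a \<Rightarrow> 'a set \<Rightarrow> 'a profile \<Rightarrow> ('a \<times> 'a) set" where
  "redge s rs a = {(x, y). y \<in> part a \<and> ((x = s \<and> y \<in> rs) \<or> (x \<in> part a \<and> y \<in> invs a x))}"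

text \<open>Feasible action profiles F(theta) (r = true neighbour sets of buyers).\<close>
definition feasible :: "'a set \<Rightarrow> 'a \<Rightarrow> 'a set \<Rightarrow> ('a \<Rightarrow> 'a set) \<Rightarrow> 'a profile \<Rightarrow> bool" where
  "feasible N s rs r a \<longleftrightarrow>
     (\<forall>i. a i \<noteq> None \<longrightarrow> i \<in> N) \<and>
     (\<forall>i v' r'. a i = Some (v', r') \<longrightarrow> v' \<ge> 0 \<and> r' \<subseteq> r i) \<and>
     (\<forall>i \<in> part a. (s, i) \<in> (redge s rs a)\<^sup>+)"

text \<open>D is a cut set of i: every path from s to i (i included) meets D.\<close>
definition cutset :: "'a \<Rightarrow> 'a set \<Rightarrow> 'a profile \<Rightarrow> 'a set \<Rightarrow> 'a \<Rightarrow> bool" where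
  "cutset s rs a D i \<longleftrightarrow> D \<subseteq> part a \<and>
     (s, i) \<notin> (redge s rs a \<inter> {(x, y). x \<notin> D \<and> y \<notin> D})\<^sup>*"

definition min_cutset :: "'a \<Rightarrow> 'a set \<Rightarrow> 'a profile \<Rightarrow> 'a set \<Rightarrow> 'a \<Rightarrow> bool" where
  "min_cutset s rs a D i \<longleftrightarrow> cutset s rs a D i \<and> (\<forall>D'. D' \<subset> D \<longrightarrow> \<not> cutset s rs a D' i)"

definition critical :: "'a \<Rightarrow> 'a set \<Rightarrow> 'a profile \<Rightarrow> 'a \<Rightarrow> 'a \<Rightarrow> bool" where
  "critical s rs a j i \<longleftrightarrow> (\<exists>D. min_cutset s rs a D i \<and> j \<in> D)"

definition strong :: "'a \<Rightarrow> 'a set \<Rightarrow> 'a profile \<Rightarrow> 'a \<Rightarrow> 'a \<Rightarrow> bool" where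
  "strong s rs a j i \<longleftrightarrow> min_cutset s rs a {j} i"

definition weak :: "'a \<Rightarrow> 'a set \<Rightarrow> 'a profile \<Rightarrow> 'a \<Rightarrow> 'a \<Rightarrow> bool" where
  "weak s rs a j i \<longleftrightarrow> critical s rs a j i \<and> \<not> strong s rs a j i"

definition Vset :: "'a \<Rightarrow> 'a set \<Rightarrow> 'a profile \<Rightarrow> 'a \<Rightarrow> 'a set" where
  "Vset s rs a i = {j \<in> part a. strong s rs a i j}"

definition Nminus :: "'a \<Rightarrow> 'a set \<Rightarrow> 'a profile \<Rightarrow> 'a set \<Rightarrow> 'a set" where
  "Nminus s rs a K = part a - (\<Union>i\<in>K. Vset s rs a i)"

text \<open>Highest reported valuation in D (0 for the empty set: seller's valuation).\<close>
definition vfirst :: "'a profile \<Rightarrow> 'a set \<Rightarrow> real" where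
  "vfirst a D = Max (insert 0 (bid a ` D))"

definition depth :: "'a \<Rightarrow> 'a set \<Rightarrow> 'a profile \<Rightarrow> 'a \<Rightarrow> nat" where
  "depth s rs a i = (LEAST n. (s, i) \<in> (redge s rs a) ^^ n)"

definition sca_seq :: "'a \<Rightarrow> 'a set \<Rightarrow> 'a profile \<Rightarrow> 'a \<Rightarrow> 'a list" where
  "sca_seq s rs a h = (SOME xs. distinct xs \<and> set xs = {j. strong s rs a j h} \<and>
      sorted_wrt (\<lambda>x y. depth s rs a x < depth s rs a y) xs)"

definition spath :: "'a \<Rightarrow> 'a set \<Rightarrow> 'a profile \<Rightarrow> 'a list \<Rightarrow> bool" where
  "spath s rs a xs \<longleftrightarrow> xs \<noteq> [] \<and> distinct xs \<and>
     (\<forall>k. Suc k < length xs \<longrightarrow> (xs ! k, xs ! Suc k) \<in> redge s rs a)"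

definition Mset :: "'a \<Rightarrow> 'a set \<Rightarrow> 'a profile \<Rightarrow> 'a \<Rightarrow> 'a \<Rightarrow> 'a \<Rightarrow> 'a set" where
  "Mset s rs a h x y = {k. weak s rs a k h \<and>
     (\<exists>xs. spath s rs a xs \<and> hd xs = x \<and> last xs = y \<and> k \<in> set xs)}"

text \<open>FDM, for a given realisation of the random tie-breaking: h is the chosen highest
bidder and gsel the chosen element of argmax_{i in D} vfirst(V_i). Indices of the
sequence C are 0-based here.\<close>

definition Kset :: "'a \<Rightarrow> 'a set \<Rightarrow> 'a profile \<Rightarrow> 'a \<Rightarrow> nat \<Rightarrow> 'a set" where
  "Kset s rs a h j = (let C = sca_seq s rs a h in
     if Suc j < length C then insert (C ! Suc j) (Mset s rs a h (C ! j) (C ! Suc j)) else {})"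

definition fdm_win :: "'a \<Rightarrow> 'a set \<Rightarrow> 'a profile \<Rightarrow> 'a \<Rightarrow> nat" where
  "fdm_win s rs a h = (let C = sca_seq s rs a h in
     LEAST j. j < length C \<and> bid a (C ! j) = vfirst a (Nminus s rs a (Kset s rs a h j)))"

definition Mj :: "'a \<Rightarrow> 'a set \<Rightarrow> 'a profile \<Rightarrow> 'a \<Rightarrow> nat \<Rightarrow> 'a set" where
  "Mj s rs a h j = (let C = sca_seq s rs a h in Mset s rs a h (C ! (j - 1)) (C ! j))"

definition Rc :: "'a \<Rightarrow> 'a set \<Rightarrow> 'a profile \<Rightarrow> 'a \<Rightarrow> ('a set \<Rightarrow> 'a) \<Rightarrow> nat \<Rightarrow> real" where
  "Rc s rs a h gsel j = (let C = sca_seq s rs a h; M = Mj s rs a h j;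
       G = (if M = {} then {} else {gsel M}) in
     if j = 0 then 0 else
       (vfirst a (Nminus s rs a (insert (C ! j) G))
        - vfirst a (Nminus s rs a (insert (C ! j) M))) / (real (card M) + 1))"

definition Rm :: "'a \<Rightarrow> 'a set \<Rightarrow> 'a profile \<Rightarrow> 'a \<Rightarrow> nat \<Rightarrow> 'a \<Rightarrow> real" where
  "Rm s rs a h j i = (let C = sca_seq s rs a h; M = Mj s rs a h j in
       (vfirst a (Nminus s rs a {i, C ! j})
        - vfirst a (Nminus s rs a (insert (C ! j) M))) / (real (card M) + 1))"

definition fdm_alloc :: "'a \<Rightarrow> 'a set \<Rightarrow> 'a profile \<Rightarrow> 'a \<Rightarrow> 'a \<Rightarrow> real" where
  "fdm_alloc s rs a h i = (if i = sca_seq s rs a h ! fdm_win s rs a h then 1 else 0)"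

definition fdm_pay :: "'a \<Rightarrow> 'a set \<Rightarrow> 'a profile \<Rightarrow> 'a \<Rightarrow> ('a set \<Rightarrow> 'a) \<Rightarrow> 'a \<Rightarrow> real" where
  "fdm_pay s rs a h gsel i = (let C = sca_seq s rs a h; w = fdm_win s rs a h in
     if \<exists>j\<le>w. C ! j = i then
       (let j = (LEAST j. j \<le> w \<and> C ! j = i) in
         if j < w then vfirst a (Nminus s rs a {i}) - vfirst a (Nminus s rs a (Kset s rs a h j))
                        - Rc s rs a h gsel j
         else vfirst a (Nminus s rs a {i}) - Rc s rs a h gsel j)
     else if \<exists>j. 1 \<le> j \<and> j \<le> w \<and> i \<in> Mj s rs a h j then
       - Rm s rs a h (LEAST j. 1 \<le> j \<and> j \<le> w \<and> i \<in> Mj s rs a h j) i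
     else 0)"

definition valid_h :: "'a profile \<Rightarrow> 'a \<Rightarrow> bool" where
  "valid_h a h \<longleftrightarrow> h \<in> part a \<and> (\<forall>j \<in> part a. bid a j \<le> bid a h)"

definition valid_gsel :: "'a \<Rightarrow> 'a set \<Rightarrow> 'a profile \<Rightarrow> ('a set \<Rightarrow> 'a) \<Rightarrow> bool" where
  "valid_gsel s rs a gsel \<longleftrightarrow> (\<forall>D. D \<noteq> {} \<and> D \<subseteq> part a \<longrightarrow> gsel D \<in> D \<and>
     (\<forall>x \<in> D. vfirst a (Vset s rs a x) \<le> vfirst a (Vset s rs a (gsel D))))"

end

theory Submission imports Defs begin

abbreviation av :: "('a \<times> 'a) set \<Rightarrow> 'a set \<Rightarrow> ('a \<times> 'a) set" where
  "av R D \<equiv> R \<inter> {(x, y). x \<notin> D \<and> y \<notin> D}"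

lemma av_split:
  assumes "(x,y) \<in> (av R D)\<^sup>*"
  shows "(x,y) \<in> (av R (insert c D))\<^sup>* \<or> (x,c) \<in> (av R D)\<^sup>*"
  using assms
proof (induction rule: rtrancl_induct)
  case base then show ?case by simp
next
  case (step y z)
  show ?case
  proof (cases "z = c")
    case True then show ?thesis using rtrancl_into_rtrancl[OF step.hyps(1,2)] by auto
  next
    case False
    show ?thesis
    proof (cases "y = c")
      case True then show ?thesis using step by auto
    next
      case False
      with step \<open>z \<noteq> c\<close> show ?thesis
        by (auto intro: rtrancl_into_rtrancl)
    qed
  qed
qed

lemma av_end:
  assumes "(u,w) \<in> (av R D)\<^sup>*" "w \<in> D" shows "u = w"
  using assms by (cases rule: rtranclE) auto

lemma dich:
  assumes "(s,h) \<in> R\<^sup>*" "x \<noteq> y"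
  shows "(s,h) \<in> (av R {x,y})\<^sup>* \<or> (x,h) \<in> (av R {y})\<^sup>* \<or> (y,h) \<in> (av R {x})\<^sup>*"
  using assms(1)
proof (induction rule: rtrancl_induct)
  case base then show ?case by simp
next
  case (step v z)
  show ?case
  proof (cases "z = x \<or> z = y")
    case True then show ?thesis by auto
  next
    case zn: False
    from step.IH show ?thesis
    proof (elim disjE)
      assume H: "(s, v) \<in> (av R {x, y})\<^sup>*"
      show ?thesis
      proof (cases "v = x")
        case True then show ?thesis using step zn assms(2) by (auto intro: r_into_rtrancl)
      next
        case False
        show ?thesis
        proof (cases "v = y")
          case True then show ?thesis using step zn assms(2) by (auto intro: r_into_rtrancl)
        next
          case False
          then show ?thesis using H step zn \<open>v \<noteq> x\<close> by (auto intro: rtrancl_into_rtrancl)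
        qed
      qed
    next
      assume H: "(x, v) \<in> (av R {y})\<^sup>*"
      have "v \<noteq> y" using av_end[OF H] assms(2) by auto
      then show ?thesis using H step zn by (auto intro: rtrancl_into_rtrancl)
    next
      assume H: "(y, v) \<in> (av R {x})\<^sup>*"
      have "v \<noteq> x" using av_end[OF H] assms(2) by auto
      then show ?thesis using H step zn by (auto intro: rtrancl_into_rtrancl)
    qed
  qed
qed

lemma relpow_cut:
  "\<forall>x. (s,x) \<in> R^^n \<longrightarrow> x \<noteq> y \<longrightarrow> (s,x) \<notin> (av R {y})\<^sup>* \<longrightarrow> (\<exists>m<n. (s,y) \<in> R^^m)"
proof (induction n)
  case 0 then show ?case by auto
next
  case (Suc n)
  show ?case
  proof (intro allI impI)
    fix x assume x: "(s,x) \<in> R^^Suc n" "x \<noteq> y" "(s,x) \<notin> (av R {y})\<^sup>*"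
    from x(1) obtain z where z: "(s,z) \<in> R^^n" "(z,x) \<in> R" by (rule relpow_Suc_E)
    show "\<exists>m<Suc n. (s,y) \<in> R^^m"
    proof (cases "z = y")
      case True then show ?thesis using z by auto
    next
      case False
      have "(s,z) \<notin> (av R {y})\<^sup>*"
      proof
        assume "(s,z) \<in> (av R {y})\<^sup>*"
        moreover have "(z,x) \<in> av R {y}" using z False x(2) by auto
        ultimately have "(s,x) \<in> (av R {y})\<^sup>*" by (rule rtrancl_into_rtrancl)
        with x(3) show False by simp
      qed
      then obtain m where "m < n" "(s,y) \<in> R^^m" using Suc.IH z(1) False by blast
      then show ?thesis by (intro exI[of _ m]) auto
    qed
  qed
qed

lemma sorted_exists:
  fixes f :: "'a \<Rightarrow> nat"
  assumes "finite S" "\<forall>x\<in>S. \<forall>y\<in>S. x \<noteq> y \<longrightarrow> f x \<noteq> f y"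
  shows "\<exists>xs. distinct xs \<and> set xs = S \<and> sorted_wrt (\<lambda>x y. f x < f y) xs"
proof -
  obtain xs0 where xs0: "set xs0 = S" "distinct xs0" using finite_distinct_list[OF assms(1)] by blast
  define ys where "ys = sort_key f xs0"
  have d: "distinct ys" "set ys = S" using xs0 by (auto simp: ys_def)
  have "sorted (map f ys)" by (simp add: ys_def)
  then have so: "sorted_wrt (\<lambda>x y. f x \<le> f y) ys" by (simp add: sorted_wrt_map)
  have "sorted_wrt (\<lambda>x y. f x < f y) ys"
    unfolding sorted_wrt_iff_nth_less
  proof (intro allI impI)
    fix i j assume ij: "i < j" "j < length ys"
    have "f (ys!i) \<le> f (ys!j)" using so ij unfolding sorted_wrt_iff_nth_less by blast
    moreover have "ys!i \<noteq> ys!j" using d(1) ij by (simp add: nth_eq_iff_index_eq)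
    moreover have "ys!i \<in> S" "ys!j \<in> S" using ij d(2) by auto
    ultimately show "f (ys!i) < f (ys!j)" using assms(2) by force
  qed
  then show ?thesis using d by blast
qed

context
  fixes s :: 'a and rs :: "'a set" and a :: "'a profile"
  assumes reach: "\<forall>i\<in>part a. (s,i) \<in> (redge s rs a)\<^sup>+"
    and snp: "s \<notin> part a"
begin

lemma strong_iff:
  assumes "m \<in> part a"
  shows "strong s rs a c m \<longleftrightarrow> c \<in> part a \<and> (s,m) \<notin> (av (redge s rs a) {c})\<^sup>*"
proof -
  have nc: "\<not> cutset s rs a {} m"
    using reach assms unfolding cutset_def by (auto dest: trancl_into_rtrancl)
  have "D' \<subset> {c} \<longleftrightarrow> D' = {}" for D' :: "'a set" by auto
  then show ?thesis using nc unfolding strong_def min_cutset_def by (auto simp: cutset_def)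
qed

lemma strong_part: "strong s rs a c m \<Longrightarrow> c \<in> part a"
  unfolding strong_def min_cutset_def cutset_def by auto

lemma strong_part2: "strong s rs a c m \<Longrightarrow> m \<in> part a"
proof (rule ccontr)
  assume "strong s rs a c m" "m \<notin> part a"
  then have "cutset s rs a {} m" unfolding cutset_def
  proof -
    have "m \<noteq> s \<Longrightarrow> (s,m) \<notin> (redge s rs a \<inter> {(x, y). x \<notin> {} \<and> y \<notin> {}})\<^sup>*"
      using \<open>m \<notin> part a\<close> by (auto elim: rtranclE simp: redge_def)
    moreover have "m \<noteq> s"
      using \<open>strong s rs a c m\<close> unfolding strong_def min_cutset_def cutset_def by auto
    ultimately show "{} \<subseteq> part a \<and> (s, m) \<notin> (redge s rs a \<inter> {(x, y). x \<notin> {} \<and> y \<notin> {}})\<^sup>*" by auto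
  qed
  then show False using \<open>strong s rs a c m\<close> unfolding strong_def min_cutset_def by auto
qed

lemma strong_self: assumes "h \<in> part a" shows "strong s rs a h h"
proof -
  have "s \<noteq> h" using assms snp by auto
  have "(s,h) \<notin> (av (redge s rs a) {h})\<^sup>*"
  proof
    assume "(s,h) \<in> (av (redge s rs a) {h})\<^sup>*"
    from av_end[OF this] \<open>s \<noteq> h\<close> show False by simp
  qed
  then show ?thesis using strong_iff[OF assms] assms by blast
qed

lemma strong_trans:
  assumes "strong s rs a c k" "strong s rs a k m"
  shows "strong s rs a c m"
proof -
  have m: "m \<in> part a" using strong_part2 assms(2) .
  have k: "k \<in> part a" using strong_part assms(2) .
  have c: "c \<in> part a" using strong_part assms(1) .
  have 1: "(s,k) \<notin> (av (redge s rs a) {c})\<^sup>*" using strong_iff[OF k] assms(1) by blast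
  have 2: "(s,m) \<notin> (av (redge s rs a) {k})\<^sup>*" using strong_iff[OF m] assms(2) by blast
  have "(s,m) \<notin> (av (redge s rs a) {c})\<^sup>*"
  proof
    assume "(s,m) \<in> (av (redge s rs a) {c})\<^sup>*"
    from av_split[OF this, of k] show False
    proof
      assume "(s, m) \<in> (av (redge s rs a) (insert k {c}))\<^sup>*"
      moreover have "av (redge s rs a) (insert k {c}) \<subseteq> av (redge s rs a) {k}" by auto
      ultimately have "(s, m) \<in> (av (redge s rs a) {k})\<^sup>*" using rtrancl_mono by blast
      with 2 show False by simp
    next
      assume "(s, k) \<in> (av (redge s rs a) {c})\<^sup>*" with 1 show False by simp
    qed
  qed
  then show ?thesis using strong_iff[OF m] c by blast
qed

lemma strong_dich:
  assumes "strong s rs a x h" "strong s rs a y h" "x \<noteq> y"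
  shows "strong s rs a x y \<or> strong s rs a y x"
proof (rule ccontr)
  assume nn: "\<not> (strong s rs a x y \<or> strong s rs a y x)"
  have h: "h \<in> part a" using strong_part2 assms(1) .
  have xp: "x \<in> part a" and yp: "y \<in> part a" using strong_part assms by auto
  have 1: "(s,y) \<in> (av (redge s rs a) {x})\<^sup>*" using nn strong_iff[OF yp] xp by blast
  have 2: "(s,x) \<in> (av (redge s rs a) {y})\<^sup>*" using nn strong_iff[OF xp] yp by blast
  have hx: "(s,h) \<notin> (av (redge s rs a) {x})\<^sup>*" using assms(1) strong_iff[OF h] by blast
  have hy: "(s,h) \<notin> (av (redge s rs a) {y})\<^sup>*" using assms(2) strong_iff[OF h] by blast
  have "(s,h) \<in> (redge s rs a)\<^sup>*" using reach h by (auto dest: trancl_into_rtrancl)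
  from dich[OF this assms(3)] show False
  proof (elim disjE)
    assume "(s, h) \<in> (av (redge s rs a) {x, y})\<^sup>*"
    moreover have "av (redge s rs a) {x, y} \<subseteq> av (redge s rs a) {x}" by auto
    ultimately show False using hx rtrancl_mono by blast
  next
    assume "(x, h) \<in> (av (redge s rs a) {y})\<^sup>*"
    with 2 show False using hy by (meson rtrancl_trans)
  next
    assume "(y, h) \<in> (av (redge s rs a) {x})\<^sup>*"
    with 1 show False using hx by (meson rtrancl_trans)
  qed
qed

lemma depth_lt:
  assumes "strong s rs a y x" "y \<noteq> x"
  shows "depth s rs a y < depth s rs a x"
proof -
  have x: "x \<in> part a" using strong_part2 assms(1) .
  have nx: "(s,x) \<notin> (av (redge s rs a) {y})\<^sup>*" using strong_iff[OF x] assms(1) by blast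
  have "(s,x) \<in> (redge s rs a)\<^sup>*" using reach x by (auto dest: trancl_into_rtrancl)
  then have "\<exists>n. (s,x) \<in> redge s rs a ^^ n" by (simp add: rtrancl_power)
  then have dx: "(s,x) \<in> redge s rs a ^^ depth s rs a x"
    unfolding depth_def by (rule LeastI_ex)
  obtain m where m: "m < depth s rs a x" "(s,y) \<in> redge s rs a ^^ m"
    using relpow_cut[rule_format, OF dx not_sym[OF assms(2)] nx] by blast
  have "depth s rs a y \<le> m" unfolding depth_def using m(2) by (rule Least_le)
  with m(1) show ?thesis by simp
qed

lemma sca_props:
  assumes "h \<in> part a" "finite (part a)"
  shows "distinct (sca_seq s rs a h) \<and> set (sca_seq s rs a h) = {j. strong s rs a j h} \<and>
     sorted_wrt (\<lambda>x y. depth s rs a x < depth s rs a y) (sca_seq s rs a h)"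
proof -
  have fin: "finite {j. strong s rs a j h}"
    using assms(2) by (rule finite_subset[rotated]) (auto dest: strong_part)
  have "\<forall>x\<in>{j. strong s rs a j h}. \<forall>y\<in>{j. strong s rs a j h}. x \<noteq> y \<longrightarrow> depth s rs a x \<noteq> depth s rs a y"
  proof (intro ballI impI)
    fix x y assume "x \<in> {j. strong s rs a j h}" "y \<in> {j. strong s rs a j h}" "x \<noteq> y"
    then have "strong s rs a x y \<or> strong s rs a y x" using strong_dich by auto
    then show "depth s rs a x \<noteq> depth s rs a y"
      using depth_lt \<open>x \<noteq> y\<close> by (metis less_irrefl)
  qed
  from sorted_exists[OF fin this] show ?thesis
    unfolding sca_seq_def by (rule someI_ex)
qed

lemma weak_part: "weak s rs a k h \<Longrightarrow> k \<in> part a"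
  unfolding weak_def critical_def min_cutset_def cutset_def by auto

lemma spath_suffix:
  assumes "spath s rs a xs" "hd xs = c" "k \<in> set xs" "k \<noteq> c"
  shows "(k, last xs) \<in> (av (redge s rs a) {c})\<^sup>*"
proof -
  obtain p where p: "p < length xs" "xs!p = k" using assms(3) by (auto simp: in_set_conv_nth)
  have ne: "xs \<noteq> []" and dis: "distinct xs" using assms(1) unfolding spath_def by auto
  have c0: "xs!0 = c" using assms(2) ne by (simp add: hd_conv_nth)
  have p1: "p \<ge> 1" using p c0 assms(4) by (cases p) auto
  have "\<forall>d. p + d < length xs \<longrightarrow> (k, xs!(p+d)) \<in> (av (redge s rs a) {c})\<^sup>*"
  proof
    fix d show "p + d < length xs \<longrightarrow> (k, xs!(p+d)) \<in> (av (redge s rs a) {c})\<^sup>*"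
    proof (induction d)
      case 0 then show ?case using p by simp
    next
      case (Suc d)
      show ?case
      proof
        assume l: "p + Suc d < length xs"
        have e: "(xs!(p+d), xs!Suc (p+d)) \<in> redge s rs a"
          using assms(1) l unfolding spath_def by auto
        have n1: "xs!(p+d) \<noteq> c" using nth_eq_iff_index_eq[OF dis, of "p+d" 0] l p1 c0 ne by auto
        have n2: "xs!Suc (p+d) \<noteq> c" using nth_eq_iff_index_eq[OF dis, of "Suc (p+d)" 0] l p1 c0 ne by auto
        have "(k, xs!(p+d)) \<in> (av (redge s rs a) {c})\<^sup>*" using Suc l by simp
        then show "(k, xs!(p+Suc d)) \<in> (av (redge s rs a) {c})\<^sup>*"
          using e n1 n2 by (auto intro: rtrancl_into_rtrancl)
      qed
    qed
  qed
  then have X: "p + (length xs - 1 - p) < length xs \<longrightarrow> (k, xs!(p + (length xs - 1 - p))) \<in> (av (redge s rs a) {c})\<^sup>*"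
    by (rule spec)
  have "p + (length xs - 1 - p) < length xs" using p(1) by arith
  with X have "(k, xs!(p + (length xs - 1 - p))) \<in> (av (redge s rs a) {c})\<^sup>*" by blast
  moreover have "p + (length xs - 1 - p) = length xs - 1" using p by auto
  ultimately show ?thesis using ne by (simp add: last_conv_nth)
qed


lemma key:
  assumes h: "h \<in> part a" and fin: "finite (part a)" and j: "j < length (sca_seq s rs a h)"
  shows "Nminus s rs a {sca_seq s rs a h ! j} \<subseteq> Nminus s rs a (Kset s rs a h j)"
proof (cases "Suc j < length (sca_seq s rs a h)")
  case False
  then show ?thesis by (auto simp: Kset_def Nminus_def Let_def)
next
  case True
  define C where "C = sca_seq s rs a h"
  define c where "c = C ! j"
  define c' where "c' = C ! Suc j"
  have P: "distinct C" "set C = {j. strong s rs a j h}"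
     "sorted_wrt (\<lambda>x y. depth s rs a x < depth s rs a y) C"
    using sca_props[OF h fin] unfolding C_def by auto
  have T: "Suc j < length C" using True C_def by simp
  have sc: "strong s rs a c h" using P(2) T unfolding c_def
    by (metis Suc_lessD mem_Collect_eq nth_mem)
  have sc': "strong s rs a c' h" using P(2) T unfolding c'_def
    by (metis mem_Collect_eq nth_mem)
  have neq: "c \<noteq> c'" using nth_eq_iff_index_eq[OF P(1), of j "Suc j"] T unfolding c_def c'_def by auto
  have dlt: "depth s rs a c < depth s rs a c'" using P(3) T unfolding c_def c'_def sorted_wrt_iff_nth_less by blast
  have cc': "strong s rs a c c'"
  proof (rule ccontr)
    assume "\<not> strong s rs a c c'"
    then have "strong s rs a c' c" using strong_dich[OF sc sc' neq] by blast
    then have "depth s rs a c' < depth s rs a c" using depth_lt neq by metis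
    with dlt show False by simp
  qed
  have c'p: "c' \<in> part a" using strong_part2[OF cc'] .
  have cp: "c \<in> part a" using strong_part[OF cc'] .
  have nc': "(s,c') \<notin> (av (redge s rs a) {c})\<^sup>*" using strong_iff[OF c'p] cc' by blast
  have hall: "strong s rs a c k" if k: "k \<in> Kset s rs a h j" for k
  proof -
    have "k = c' \<or> k \<in> Mset s rs a h c c'"
      using k T unfolding Kset_def Let_def C_def c_def c'_def by (auto split: if_splits)
    then show ?thesis
    proof
      assume "k = c'" then show ?thesis using cc' by simp
    next
      assume "k \<in> Mset s rs a h c c'"
      then obtain xs where w: "weak s rs a k h" and xs: "spath s rs a xs" "hd xs = c" "last xs = c'" "k \<in> set xs"
        unfolding Mset_def by blast
      have kp: "k \<in> part a" using weak_part[OF w] .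
      have kc: "k \<noteq> c" using w sc unfolding weak_def by blast
      have "(k, c') \<in> (av (redge s rs a) {c})\<^sup>*" using spath_suffix[OF xs(1) xs(2) xs(4) kc] xs(3) by simp
      then have "(s,k) \<notin> (av (redge s rs a) {c})\<^sup>*" using nc' by (meson rtrancl_trans)
      then show ?thesis using strong_iff[OF kp] cp by blast
    qed
  qed
  show ?thesis unfolding Nminus_def Vset_def C_def[symmetric] c_def[symmetric]
    using hall strong_trans by blast
qed

lemma win:
  assumes h: "h \<in> part a" and fin: "finite (part a)" and hb: "\<forall>j\<in>part a. bid a j \<le> bid a h"
    and h0: "0 \<le> bid a h"
  shows "fdm_win s rs a h < length (sca_seq s rs a h) \<and>
    bid a (sca_seq s rs a h ! fdm_win s rs a h) = vfirst a (Nminus s rs a (Kset s rs a h (fdm_win s rs a h)))"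
proof -
  define C where "C = sca_seq s rs a h"
  have P: "distinct C" "set C = {j. strong s rs a j h}"
     "sorted_wrt (\<lambda>x y. depth s rs a x < depth s rs a y) C"
    using sca_props[OF h fin] unfolding C_def by auto
  have "h \<in> set C" using P(2) strong_self[OF h] by simp
  then obtain j0 where j0: "j0 < length C" "C ! j0 = h" by (auto simp: in_set_conv_nth)
  have nS: "\<not> Suc j0 < length C"
  proof
    assume T: "Suc j0 < length C"
    have s1: "strong s rs a (C ! Suc j0) h" using P(2) T by (metis mem_Collect_eq nth_mem)
    have ne: "C ! Suc j0 \<noteq> h" using nth_eq_iff_index_eq[OF P(1), of j0 "Suc j0"] T j0 by auto
    have "depth s rs a (C ! Suc j0) < depth s rs a h" using depth_lt[OF s1 ne] .
    moreover have "depth s rs a (C ! j0) < depth s rs a (C ! Suc j0)"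
      using P(3) T unfolding sorted_wrt_iff_nth_less by blast
    ultimately show False using j0 by simp
  qed
  have K: "Kset s rs a h j0 = {}" using nS unfolding Kset_def Let_def C_def by simp
  have "vfirst a (part a) = bid a h"
    unfolding vfirst_def by (rule Max_eqI) (use fin h hb h0 in auto)
  then have Pj0: "j0 < length C \<and> bid a (C ! j0) = vfirst a (Nminus s rs a (Kset s rs a h j0))"
    using j0 K by (simp add: Nminus_def)
  have "fdm_win s rs a h = (LEAST j. j < length C \<and> bid a (C ! j) = vfirst a (Nminus s rs a (Kset s rs a h j)))"
    unfolding fdm_win_def Let_def C_def ..
  with LeastI[of "\<lambda>j. j < length C \<and> bid a (C ! j) = vfirst a (Nminus s rs a (Kset s rs a h j))", OF Pj0]
  show ?thesis unfolding C_def by simp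
qed

end

lemma vfirst_mono: "finite B \<Longrightarrow> A \<subseteq> B \<Longrightarrow> vfirst a A \<le> vfirst a B"
  unfolding vfirst_def by (rule Max_mono) auto

lemma Nminus_sub: "Nminus s rs a K \<subseteq> part a"
  unfolding Nminus_def by auto

lemma Nminus_anti: "K \<subseteq> K' \<Longrightarrow> Nminus s rs a K' \<subseteq> Nminus s rs a K"
  unfolding Nminus_def by auto

lemma vfirst_N_anti: "finite (part a) \<Longrightarrow> K \<subseteq> K' \<Longrightarrow> vfirst a (Nminus s rs a K') \<le> vfirst a (Nminus s rs a K)"
  by (meson Nminus_anti Nminus_sub finite_subset vfirst_mono)

lemma weak_part0: "weak s rs a k h \<Longrightarrow> k \<in> part a"
  unfolding weak_def critical_def min_cutset_def cutset_def by auto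

lemma Mj_part: "Mj s rs a h j \<subseteq> part a"
  unfolding Mj_def Mset_def Let_def by (auto dest: weak_part0)

lemma Rc_nonneg:
  assumes fin: "finite (part a)" and g: "valid_gsel s rs a gsel"
  shows "0 \<le> Rc s rs a h gsel j"
proof -
  define M where "M = Mj s rs a h j"
  define G where "G = (if M = {} then {} else {gsel M})"
  have Mp: "M \<subseteq> part a" unfolding M_def by (rule Mj_part)
  have "G \<subseteq> M" using g Mp unfolding G_def valid_gsel_def by auto
  then have "vfirst a (Nminus s rs a (insert (sca_seq s rs a h ! j) M))
      \<le> vfirst a (Nminus s rs a (insert (sca_seq s rs a h ! j) G))"
    by (intro vfirst_N_anti[OF fin]) auto
  then show ?thesis unfolding Rc_def Let_def M_def[symmetric] G_def[symmetric]
    by simp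
qed

lemma Rm_nonneg:
  assumes fin: "finite (part a)" and i: "i \<in> Mj s rs a h j"
  shows "0 \<le> Rm s rs a h j i"
proof -
  have "vfirst a (Nminus s rs a (insert (sca_seq s rs a h ! j) (Mj s rs a h j)))
      \<le> vfirst a (Nminus s rs a {i, sca_seq s rs a h ! j})"
    by (intro vfirst_N_anti[OF fin]) (use i in auto)
  then show ?thesis unfolding Rm_def Let_def by simp
qed

theorem theorem1:
  fixes N :: "'a set" and s :: 'a and rs :: "'a set"
    and v :: "'a \<Rightarrow> real" and r :: "'a \<Rightarrow> 'a set"
    and a :: "'a profile" and i :: 'a and ri' :: "'a set"
    and h :: 'a and gsel :: "'a set \<Rightarrow> 'a"
  assumes "finite N" and "s \<notin> N" and "rs \<subseteq> N"
    and "\<forall>j \<in> N. r j \<subseteq> N \<union> {s} \<and> j \<notin> r j"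
    and "\<forall>j \<in> N. \<forall>k \<in> N. k \<in> r j \<longleftrightarrow> j \<in> r k"
    and "\<forall>j \<in> N. j \<in> rs \<longleftrightarrow> s \<in> r j"
    and "\<forall>j \<in> N. v j \<ge> 0"
    and "feasible N s rs r a"
    and "i \<in> N" and "a i = Some (v i, ri')"
    and "valid_h a h" and "valid_gsel s rs a gsel"
  shows "fdm_alloc s rs a h i * v i - fdm_pay s rs a h gsel i \<ge> 0"
proof -
  have pN: "part a \<subseteq> N" using assms(8) unfolding feasible_def part_def by auto
  have fin: "finite (part a)" using finite_subset[OF pN assms(1)] .
  have snp: "s \<notin> part a" using pN assms(2) by auto
  have reach: "\<forall>i\<in>part a. (s,i) \<in> (redge s rs a)\<^sup>+" using assms(8) unfolding feasible_def by auto
  have h: "h \<in> part a" and hb: "\<forall>j\<in>part a. bid a j \<le> bid a h" using assms(11) unfolding valid_h_def by auto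
  obtain vh rh where ah: "a h = Some (vh, rh)" using h unfolding part_def by auto
  have h0: "0 \<le> bid a h" using assms(8) ah unfolding feasible_def bid_def by auto
  have bi: "bid a i = v i" using assms(10) unfolding bid_def by simp
  have vi: "0 \<le> v i" using assms(7,9) by auto
  define C where "C = sca_seq s rs a h"
  define w where "w = fdm_win s rs a h"
  have W: "w < length C" "bid a (C ! w) = vfirst a (Nminus s rs a (Kset s rs a h w))"
    using win[OF reach snp h fin hb h0] unfolding C_def w_def by auto
  have al: "0 \<le> fdm_alloc s rs a h i * v i" using vi unfolding fdm_alloc_def by simp
  have pay: "fdm_pay s rs a h gsel i = (if \<exists>j\<le>w. C ! j = i then
       (let j = (LEAST j. j \<le> w \<and> C ! j = i) in
         if j < w then vfirst a (Nminus s rs a {i}) - vfirst a (Nminus s rs a (Kset s rs a h j))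
                        - Rc s rs a h gsel j
         else vfirst a (Nminus s rs a {i}) - Rc s rs a h gsel j)
     else if \<exists>j. 1 \<le> j \<and> j \<le> w \<and> i \<in> Mj s rs a h j then
       - Rm s rs a h (LEAST j. 1 \<le> j \<and> j \<le> w \<and> i \<in> Mj s rs a h j) i
     else 0)"
    unfolding fdm_pay_def C_def w_def Let_def ..
  show ?thesis
  proof (cases "\<exists>j\<le>w. C ! j = i")
    case True
    define j where "j = (LEAST j. j \<le> w \<and> C ! j = i)"
    have J: "j \<le> w" "C ! j = i" using LeastI_ex[OF True] unfolding j_def by auto
    have jl: "j < length C" using J W by simp
    have sub: "vfirst a (Nminus s rs a {i}) \<le> vfirst a (Nminus s rs a (Kset s rs a h j))"
      using key[OF reach snp h fin jl[unfolded C_def]] J(2) fin unfolding C_def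
      by (meson Nminus_sub finite_subset vfirst_mono)
    have rc: "0 \<le> Rc s rs a h gsel j" using Rc_nonneg[OF fin assms(12)] .
    show ?thesis
    proof (cases "j < w")
      case True
      then have "fdm_pay s rs a h gsel i = vfirst a (Nminus s rs a {i}) - vfirst a (Nminus s rs a (Kset s rs a h j))
                        - Rc s rs a h gsel j"
        using pay \<open>\<exists>j\<le>w. C ! j = i\<close> unfolding j_def[symmetric] Let_def by simp
      then show ?thesis using al sub rc by linarith
    next
      case False
      then have jw: "j = w" using J by simp
      then have "fdm_pay s rs a h gsel i = vfirst a (Nminus s rs a {i}) - Rc s rs a h gsel j"
        using pay \<open>\<exists>j\<le>w. C ! j = i\<close> unfolding j_def[symmetric] Let_def by simp
      moreover have "fdm_alloc s rs a h i = 1" using J jw unfolding fdm_alloc_def C_def w_def by simp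
      moreover have "v i = vfirst a (Nminus s rs a (Kset s rs a h j))" using W J jw bi by simp
      ultimately show ?thesis using sub rc by simp
    qed
  next
    case False
    note F = False
    show ?thesis
    proof (cases "\<exists>j. 1 \<le> j \<and> j \<le> w \<and> i \<in> Mj s rs a h j")
      case True
      define j where "j = (LEAST j. 1 \<le> j \<and> j \<le> w \<and> i \<in> Mj s rs a h j)"
      have J: "i \<in> Mj s rs a h j" using LeastI_ex[OF True] unfolding j_def by auto
      have "fdm_pay s rs a h gsel i = - Rm s rs a h j i"
        using pay F True unfolding j_def by simp
      then show ?thesis using al Rm_nonneg[OF fin J] by simp
    next
      case False
      then have "fdm_pay s rs a h gsel i = 0" by (subst pay) (simp only: F False if_False)
      then show ?thesis using al by simp
    qed
  qed
qed

end
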